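(* Let $G=(V,E)$ be a finite simple undirected graph, let $M$ be computed by a run of \textsc{MinGreedy} on $G$, and let $M^*$ be a maximum matching such that each component of $(V,M\cup M^* )$ with an edge is an edge of $M\cap M^*$ or an $M$-$M^*$-path. Let $w$ be an endpoint of an $M$-$M^*$-path $X$. Then $w$ is the target of at least one transfer, and $X$ (i.e. its two endpoints together) is the target of at least two transfers.
   Context: \textsc{MinGreedy}: starting with $M=\emptyset$, repeatedly select an arbitrary node $u$ of minimum non-zero current degree and an arbitrary neighbor $v$ of $u$, add $\{u,v\}$ to $M$ and remove all edges incident with $u$ or $v$ from the current graph. An $M$-$M^*$-path is a component of $(V,M\cup M^* )$ that is an alternating path starting and ending with an $M^*$-edge, with $m\geq1$ edges of $M$ and $m+1$ edges of $M^*$; its endpoints are its two $M$-uncovered end nodes. Let $F=E\setminus(M\cup M^* )$. For an endpoint $w$ of an $M$-$M^*$-path, an edge $\{v,w\}\in F$ is a transfer from $v$ to $w$ if, in the step of the algorithm in which $v$ is matched, the current degree of $w$ drops to at most $1$. *)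

theory Defs
  imports Main
begin

definition simple_graph :: "'a set \<Rightarrow> 'a set set \<Rightarrow> bool" where
  "simple_graph V E \<longleftrightarrow> finite V \<and>
     (\<forall>e\<in>E. \<exists>x y. x \<noteq> y \<and> x \<in> V \<and> y \<in> V \<and> e = {x, y})"

definition matching :: "'a set set \<Rightarrow> 'a set set \<Rightarrow> bool" where
  "matching E M \<longleftrightarrow> M \<subseteq> E \<and> (\<forall>e\<in>M. \<forall>f\<in>M. e \<noteq> f \<longrightarrow> e \<inter> f = {})"

definition max_matching :: "'a set set \<Rightarrow> 'a set set \<Rightarrow> bool" where
  "max_matching E M \<longleftrightarrow> matching E M \<and> (\<forall>M'. matching E M' \<longrightarrow> card M' \<le> card M)"

definition deg :: "'a set set \<Rightarrow> 'a \<Rightarrow> nat" where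
  "deg G x = card {e \<in> G. x \<in> e}"

text \<open>A run of MinGreedy is the list ss of chosen pairs (u,v), u first.
  The current graph before step i consists of the edges of E not incident
  with any node matched in steps 0..i-1.\<close>
definition cur :: "'a set set \<Rightarrow> ('a \<times> 'a) list \<Rightarrow> nat \<Rightarrow> 'a set set" where
  "cur E ss i = {e \<in> E. \<forall>j<i. fst (ss ! j) \<notin> e \<and> snd (ss ! j) \<notin> e}"

definition mingreedy_run :: "'a set set \<Rightarrow> ('a \<times> 'a) list \<Rightarrow> bool" where
  "mingreedy_run E ss \<longleftrightarrow>
     (\<forall>i<length ss. {fst (ss ! i), snd (ss ! i)} \<in> cur E ss i \<and>
        (\<forall>x. 0 < deg (cur E ss i) x \<longrightarrow> deg (cur E ss i) (fst (ss ! i)) \<le> deg (cur E ss i) x))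
     \<and> cur E ss (length ss) = {}"

definition greedy_matching :: "('a \<times> 'a) list \<Rightarrow> 'a set set" where
  "greedy_matching ss = {{u, v} | u v. (u, v) \<in> set ss}"

definition path_edges :: "'a list \<Rightarrow> 'a set set" where
  "path_edges p = {{p ! j, p ! Suc j} | j. Suc j < length p}"

text \<open>An M-M*-path: a component of (V, M \<union> M*) which is an alternating path
  x_0 ... x_{2m+1} (m \<ge> 1) starting and ending with an M*-edge.\<close>
definition mm_path :: "'a set set \<Rightarrow> 'a set set \<Rightarrow> 'a list \<Rightarrow> bool" where
  "mm_path M Ms p \<longleftrightarrow> distinct p \<and> even (length p) \<and> 4 \<le> length p \<and>
     (\<forall>j. Suc j < length p \<longrightarrow>
        (even j \<longrightarrow> {p ! j, p ! Suc j} \<in> Ms) \<and> (odd j \<longrightarrow> {p ! j, p ! Suc j} \<in> M)) \<and>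
     (\<forall>e \<in> M \<union> Ms. e \<inter> set p \<noteq> {} \<longrightarrow> e \<in> path_edges p)"

definition components_ok :: "'a set set \<Rightarrow> 'a set set \<Rightarrow> bool" where
  "components_ok M Ms \<longleftrightarrow> (\<forall>e \<in> M \<union> Ms.
      (e \<in> M \<inter> Ms \<and> (\<forall>f \<in> M \<union> Ms. f \<inter> e \<noteq> {} \<longrightarrow> f = e))
    \<or> (\<exists>p. mm_path M Ms p \<and> e \<in> path_edges p))"

definition mm_endpoint :: "'a set set \<Rightarrow> 'a set set \<Rightarrow> 'a \<Rightarrow> bool" where
  "mm_endpoint M Ms w \<longleftrightarrow> (\<exists>p. mm_path M Ms p \<and> w \<in> {hd p, last p})"

definition transfer :: "'a set set \<Rightarrow> ('a \<times> 'a) list \<Rightarrow> 'a set set \<Rightarrow> 'a \<Rightarrow> 'a \<Rightarrow> bool" where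
  "transfer E ss Ms v w \<longleftrightarrow>
     mm_endpoint (greedy_matching ss) Ms w \<and>
     {v, w} \<in> E - (greedy_matching ss \<union> Ms) \<and>
     (\<exists>i<length ss. v \<in> {fst (ss ! i), snd (ss ! i)} \<and>
        deg (cur E ss (Suc i)) w < deg (cur E ss i) w \<and>
        deg (cur E ss (Suc i)) w \<le> 1)"

end

theory Submission imports Defs begin

lemma cur_Suc: "cur E ss (Suc i) = {e \<in> cur E ss i. fst (ss!i) \<notin> e \<and> snd (ss!i) \<notin> e}"
  unfolding cur_def by (auto simp: less_Suc_eq)

lemma cur_sub: "cur E ss i \<subseteq> E"
  unfolding cur_def by auto

lemma pairs_disj:
  assumes "mingreedy_run E ss" "i < j" "j < length ss" "x \<in> {fst (ss!i), snd (ss!i)}"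
  shows "x \<notin> {fst (ss!j), snd (ss!j)}"
proof -
  have "{fst (ss!j), snd (ss!j)} \<in> cur E ss j" using assms(1,3) unfolding mingreedy_run_def by auto
  then show ?thesis using assms(2,4) unfolding cur_def by auto
qed

lemma gm_mem: "e \<in> greedy_matching ss \<longleftrightarrow> (\<exists>i<length ss. e = {fst (ss!i), snd (ss!i)})"
  unfolding greedy_matching_def by (auto simp: in_set_conv_nth) (metis prod.collapse nth_mem)

lemma gm_disj:
  assumes "mingreedy_run E ss" "e \<in> greedy_matching ss" "f \<in> greedy_matching ss" "e \<noteq> f"
  shows "e \<inter> f = {}"
proof -
  obtain i j where i: "i < length ss" "e = {fst (ss!i), snd (ss!i)}"
    and j: "j < length ss" "f = {fst (ss!j), snd (ss!j)}" using assms(2,3) gm_mem by metis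
  have "i \<noteq> j" using i j assms(4) by auto
  then consider "i < j" | "j < i" by linarith
  then show ?thesis
  proof cases
    case 1 then show ?thesis using pairs_disj[OF assms(1) 1 j(1)] i j by blast
  next
    case 2 then show ?thesis using pairs_disj[OF assms(1) 2 i(1)] i j by blast
  qed
qed

lemma gm_sub: "mingreedy_run E ss \<Longrightarrow> greedy_matching ss \<subseteq> E"
proof
  fix e assume "mingreedy_run E ss" "e \<in> greedy_matching ss"
  then obtain i where "i < length ss" "e = {fst (ss!i), snd (ss!i)}" using gm_mem by metis
  then show "e \<in> E" using \<open>mingreedy_run E ss\<close> cur_sub unfolding mingreedy_run_def by blast
qed

lemma path_edge_sub: "e \<in> path_edges p \<Longrightarrow> e \<subseteq> set p"
  unfolding path_edges_def by auto

lemma path_E: "mm_path M Ms p \<Longrightarrow> M \<subseteq> E \<Longrightarrow> Ms \<subseteq> E \<Longrightarrow> Suc j < length p \<Longrightarrow> {p!j, p!Suc j} \<in> E"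
  unfolding mm_path_def by (cases "even j") auto

lemma endpoint_nbr:
  assumes mp: "mm_path M Ms p" and wp: "w \<in> {hd p, last p}"
  shows "\<exists>x1 y. {w,x1} \<in> Ms \<and> {x1,y} \<in> M \<and> y \<noteq> w \<and> x1 \<noteq> w \<and> x1 \<in> set p \<and> w \<in> set p
     \<and> (\<forall>e\<in>M\<union>Ms. w\<in>e \<longrightarrow> e={w,x1})"
proof -
  define n where "n = length p"
  have d: "distinct p" and ev: "even n" and n4: "4 \<le> n"
    and alt: "\<And>j. Suc j < n \<Longrightarrow> (even j \<longrightarrow> {p ! j, p ! Suc j} \<in> Ms) \<and> (odd j \<longrightarrow> {p ! j, p ! Suc j} \<in> M)"
    and comp: "\<And>e. e \<in> M \<union> Ms \<Longrightarrow> e \<inter> set p \<noteq> {} \<Longrightarrow> e \<in> path_edges p"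
    using mp unfolding mm_path_def n_def by auto
  have n4': "4 \<le> length p" using mp unfolding mm_path_def by simp
  have lp: "0 < length p" using n4' by linarith
  have ne: "p \<noteq> []" using lp by blast
  have inj: "\<And>a b. a < n \<Longrightarrow> b < n \<Longrightarrow> p!a = p!b \<longleftrightarrow> a = b" using d n_def nth_eq_iff_index_eq by metis
  from wp consider "w = p!0" | "w = p!(n-1)" using ne hd_conv_nth last_conv_nth n_def by fastforce
  then show ?thesis
  proof cases
    case 1
    from lp have wset: "w \<in> set p" using 1 nth_mem by blast
    show ?thesis
    proof (intro exI conjI)
      show "{w, p!1} \<in> Ms" using alt[of 0] 1 n4 by auto
      show "{p!1, p!2} \<in> M" using alt[of 1] n4 by (auto simp: numeral_2_eq_2)
      show "p!2 \<noteq> w" "p!1 \<noteq> w" using inj[of 2 0] inj[of 1 0] 1 n4 by auto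
      show "p!1 \<in> set p" using n4' nth_mem[of 1 p] by linarith
      show "w \<in> set p" by fact
      show "\<forall>e\<in>M\<union>Ms. w\<in>e \<longrightarrow> e={w,p!1}"
      proof (intro ballI impI)
        fix e assume e: "e \<in> M \<union> Ms" "w \<in> e"
        then have "e \<in> path_edges p" using comp wset by blast
        then obtain j where j: "e = {p!j, p!Suc j}" "Suc j < n" unfolding path_edges_def n_def by auto
        have "j = 0" using e(2) j 1 inj[of 0 j] inj[of 0 "Suc j"] by auto
        then show "e = {w, p!1}" using j 1 by auto
      qed
    qed
  next
    case 2
    have "n - 1 < length p" using lp n_def by simp
    then have wset: "w \<in> set p" using 2 nth_mem by blast
    have e1: "n - 1 = Suc (n-2)" "n - 2 = Suc (n-3)" using n4 by auto
    show ?thesis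
    proof (intro exI conjI)
      show "{w, p!(n-2)} \<in> Ms" using alt[of "n-2"] 2 n4 ev e1 by (auto simp: insert_commute)
      show "{p!(n-2), p!(n-3)} \<in> M" using alt[of "n-3"] n4 ev e1 by (auto simp: insert_commute)
      show "p!(n-3) \<noteq> w" "p!(n-2) \<noteq> w" using inj[of "n-3" "n-1"] inj[of "n-2" "n-1"] 2 n4 by auto
      show "p!(n-2) \<in> set p" using n4' n_def nth_mem[of "n-2" p] by linarith
      show "w \<in> set p" by fact
      show "\<forall>e\<in>M\<union>Ms. w\<in>e \<longrightarrow> e={w,p!(n-2)}"
      proof (intro ballI impI)
        fix e assume e: "e \<in> M \<union> Ms" "w \<in> e"
        then have "e \<in> path_edges p" using comp wset by blast
        then obtain j where j: "e = {p!j, p!Suc j}" "Suc j < n" unfolding path_edges_def n_def by auto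
        have "j = n-2" using e(2) j 2 inj[of "n-1" j] inj[of "n-1" "Suc j"] n4 by auto
        then show "e = {w, p!(n-2)}" using j 2 e1 by auto
      qed
    qed
  qed
qed

lemma endpoint_unmatched:
  assumes run: "mingreedy_run E ss" and MM: "M = greedy_matching ss"
    and mp: "mm_path M Ms p" and wp: "w \<in> {hd p, last p}" and i: "i < length ss"
  shows "w \<notin> {fst (ss!i), snd (ss!i)}"
proof
  assume w: "w \<in> {fst (ss!i), snd (ss!i)}"
  obtain x1 y where x: "{w,x1} \<in> Ms" "{x1,y} \<in> M" "y \<noteq> w" "x1 \<noteq> w"
     "\<forall>e\<in>M\<union>Ms. w\<in>e \<longrightarrow> e={w,x1}" using endpoint_nbr[OF mp wp] by metis
  have eM: "{fst (ss!i), snd (ss!i)} \<in> M" unfolding MM gm_mem using i by blast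
  then have eMs: "{fst (ss!i), snd (ss!i)} \<in> M \<union> Ms" by (rule UnI1)
  have "{fst (ss!i), snd (ss!i)} = {w,x1}" using x(5) eMs w by metis
  then have wM: "{w,x1} \<in> M" using eM by simp
  have ne: "{w,x1} \<noteq> {x1,y}" using x(3,4) by (simp add: doubleton_eq_iff)
  have "{w,x1} \<inter> {x1,y} = {}" using gm_disj[OF run, of "{w,x1}" "{x1,y}"] wM x(2) ne MM by simp
  then show False by auto
qed


lemma mm_path_comp: "mm_path M Ms p \<Longrightarrow> e \<in> M \<union> Ms \<Longrightarrow> e \<inter> set p \<noteq> {} \<Longrightarrow> e \<in> path_edges p"
  unfolding mm_path_def by blast

lemma run_min: "mingreedy_run E ss \<Longrightarrow> i < length ss \<Longrightarrow> 0 < deg (cur E ss i) x \<Longrightarrow>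
    deg (cur E ss i) (fst (ss!i)) \<le> deg (cur E ss i) x"
  unfolding mingreedy_run_def by blast

lemma sg_edge: "simple_graph V E \<Longrightarrow> e \<in> E \<Longrightarrow> \<exists>x y. x \<noteq> y \<and> x \<in> V \<and> y \<in> V \<and> e = {x, y}"
  unfolding simple_graph_def by (erule conjE) (erule bspec)

lemma E_two: "simple_graph V E \<Longrightarrow> e \<in> E \<Longrightarrow> \<exists>a b. a \<noteq> b \<and> e = {a,b}"
proof -
  assume "simple_graph V E" "e \<in> E"
  then obtain x y where "x \<noteq> y" "e = {x, y}" using sg_edge by metis
  then show ?thesis by blast
qed

lemma E_sub: "simple_graph V E \<Longrightarrow> e \<in> E \<Longrightarrow> e \<subseteq> V"
proof -
  assume "simple_graph V E" "e \<in> E"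
  then obtain x y where "x \<in> V" "y \<in> V" "e = {x, y}" using sg_edge by metis
  then show ?thesis by blast
qed

lemma E_fin: "simple_graph V E \<Longrightarrow> finite E"
proof -
  assume sg: "simple_graph V E"
  then have "E \<subseteq> Pow V" using E_sub by blast
  moreover have "finite V" using sg unfolding simple_graph_def by auto
  ultimately show ?thesis using finite_subset by blast
qed

lemma endpoint_transfer:
  assumes sg: "simple_graph V E" and run: "mingreedy_run E ss" and MM: "M = greedy_matching ss"
    and MsE: "Ms \<subseteq> E" and mp: "mm_path M Ms p" and wp: "w \<in> {hd p, last p}"
  shows "\<exists>v. transfer E ss Ms v w"
proof -
  define L where "L = length ss"
  define R where "R i = {e \<in> cur E ss i. w \<in> e}" for i
  define D where "D i = deg (cur E ss i) w" for i
  have DR: "D i = card (R i)" for i unfolding D_def R_def deg_def by simp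
  have finE: "finite E" using E_fin[OF sg] .
  have finR: "finite (R i)" for i
  proof -
    have "R i \<subseteq> E" unfolding R_def using cur_sub[of E ss i] by blast
    then show ?thesis using finE by (rule finite_subset)
  qed
  have ME: "M \<subseteq> E" using gm_sub[OF run] MM by simp
  obtain x1 y where x: "{w,x1} \<in> Ms" "{x1,y} \<in> M" "y \<noteq> w" "x1 \<noteq> w" "x1 \<in> set p" "w \<in> set p"
     and only: "\<forall>e\<in>M\<union>Ms. w\<in>e \<longrightarrow> e={w,x1}" using endpoint_nbr[OF mp wp] by metis
  have unm: "\<And>i. i < L \<Longrightarrow> w \<notin> {fst (ss!i), snd (ss!i)}"
    using endpoint_unmatched[OF run MM mp wp] unfolding L_def by blast
  have mend: "mm_endpoint (greedy_matching ss) Ms w" unfolding mm_endpoint_def MM[symmetric] using mp wp by blast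
  have tr: "\<exists>v. transfer E ss Ms v w"
    if i: "i < L" and yi: "y' \<in> {fst (ss!i), snd (ss!i)}" and ycur: "{y',w} \<in> cur E ss i"
      and yx: "y' \<noteq> x1" and dr: "D (Suc i) < D i" "D (Suc i) \<le> 1" for i y'
  proof -
    have "y' \<noteq> w" using unm[OF i] yi by blast
    have inE: "{y',w} \<in> E" using ycur cur_sub by blast
    have nM: "{y',w} \<notin> greedy_matching ss"
    proof
      assume "{y',w} \<in> greedy_matching ss"
      then obtain j where "j < length ss" "{y',w} = {fst (ss!j), snd (ss!j)}" using gm_mem by metis
      then show False using unm[of j] L_def by auto
    qed
    have nMs: "{y',w} \<notin> Ms"
    proof
      assume "{y',w} \<in> Ms"
      then have "{y',w} \<in> M \<union> Ms" by (rule UnI2)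
      moreover have "w \<in> {y',w}" by simp
      ultimately have "{y',w} = {w,x1}" using only by metis
      then show False using yx \<open>y' \<noteq> w\<close> by (auto simp: doubleton_eq_iff)
    qed
    have ex: "\<exists>i<length ss. y' \<in> {fst (ss ! i), snd (ss ! i)} \<and>
        deg (cur E ss (Suc i)) w < deg (cur E ss i) w \<and> deg (cur E ss (Suc i)) w \<le> 1"
      using i yi dr unfolding L_def D_def by blast
    have "{y',w} \<in> E - (greedy_matching ss \<union> Ms)" using inE nM nMs by blast
    then show ?thesis unfolding transfer_def using mend ex by blast
  qed
  have C: "(\<exists>v. transfer E ss Ms v w) \<or> (x1 \<in> {fst (ss!i), snd (ss!i)} \<and> D (Suc i) = D i - 1)"
    if i: "i < L" and dr: "D (Suc i) < D i" "D (Suc i) \<le> 1" for i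
  proof (cases "\<exists>y'. y' \<in> {fst (ss!i), snd (ss!i)} \<and> {y',w} \<in> cur E ss i \<and> y' \<noteq> x1")
    case True
    then show ?thesis using tr[OF i _ _ _ dr] by blast
  next
    case False
    have sub: "R (Suc i) \<subseteq> R i" unfolding R_def cur_Suc by auto
    have diff: "R i - R (Suc i) \<subseteq> {{w,x1}}"
    proof
      fix e assume e: "e \<in> R i - R (Suc i)"
      then have ec: "e \<in> cur E ss i" "w \<in> e" and eo: "fst (ss!i) \<in> e \<or> snd (ss!i) \<in> e"
        unfolding R_def cur_Suc by auto
      have "e \<in> E" using ec(1) cur_sub by blast
      then obtain a b where ab: "a \<noteq> b" "e = {a,b}" using E_two[OF sg] by metis
      obtain y' where y': "y' \<in> {fst (ss!i), snd (ss!i)}" "y' \<in> e" using eo by blast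
      have "y' \<noteq> w" using unm[OF i] y' by blast
      then have "e = {y',w}" using ab y'(2) ec(2) by auto
      then have "{y',w} \<in> cur E ss i" using ec(1) by simp
      then have "y' = x1" using False y'(1) by blast
      then show "e \<in> {{w,x1}}" using \<open>e = {y',w}\<close> by auto
    qed
    have cd: "D (Suc i) = D i - card (R i - R (Suc i))"
      using card_Diff_subset[OF finR sub] card_mono[OF finR sub] DR by simp
    have "card (R i - R (Suc i)) \<le> 1" using card_mono[OF _ diff] by simp
    moreover have "R i - R (Suc i) \<noteq> {}"
    proof
      assume "R i - R (Suc i) = {}"
      then have "card (R i - R (Suc i)) = 0" by (simp only: card.empty)
      then show False using dr cd by simp
    qed
    ultimately have c1: "card (R i - R (Suc i)) = 1" by (simp add: Suc_leI card_gt_0_iff finR le_antisym)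
    have "{w,x1} \<in> R i - R (Suc i)" using diff \<open>R i - R (Suc i) \<noteq> {}\<close> by blast
    then have "x1 \<in> {fst (ss!i), snd (ss!i)}" using unm[OF i] unfolding R_def cur_Suc by auto
    then show ?thesis using cd c1 by simp
  qed
  have DL: "D L = 0" using run unfolding D_def L_def mingreedy_run_def deg_def by simp
  have ex2: "\<exists>k<L. 2 \<le> D k"
  proof -
    define P where "P i \<longleftrightarrow> i < L \<and> (fst (ss!i) \<in> set p \<or> snd (ss!i) \<in> set p)" for i
    have "{x1,y} \<in> greedy_matching ss" using x(2) MM by simp
    then obtain i0 where i0: "i0 < L" "{x1,y} = {fst (ss!i0), snd (ss!i0)}" unfolding gm_mem L_def by blast
    have "x1 \<in> {fst (ss!i0), snd (ss!i0)}" using i0(2) by (metis insertI1)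
    then have "P i0" using i0(1) x(5) unfolding P_def by blast
    define k where "k = (LEAST i. P i)"
    have Pk: "P k" using LeastI[of P, OF \<open>P i0\<close>] k_def by simp
    have before: "\<And>j. j < k \<Longrightarrow> \<not> P j" using not_less_Least k_def by blast
    have kL: "k < L" using Pk P_def by simp
    have nb: "fst (ss!j) \<notin> set p \<and> snd (ss!j) \<notin> set p" if "j < k" for j
    proof -
      have "j < L" using that kL by simp
      then show ?thesis using before[OF that] unfolding P_def by simp
    qed
    have incur: "e \<in> cur E ss k" if "e \<in> E" "e \<subseteq> set p" for e
      unfolding cur_def using that nb by blast
    define u where "u = fst (ss!k)"
    have kM: "{u, snd (ss!k)} \<in> M" unfolding MM gm_mem u_def using kL unfolding L_def by blast
    have "{u, snd (ss!k)} \<inter> set p \<noteq> {}" using Pk P_def u_def by auto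
    then have "{u, snd (ss!k)} \<in> path_edges p" using mm_path_comp[OF mp] kM by blast
    then have uset: "u \<in> set p" using path_edge_sub by blast
    then obtain a where a: "a < length p" "u = p!a" by (metis in_set_conv_nth)
    have d: "distinct p" using mp unfolding mm_path_def by simp
    have a0: "a \<noteq> 0"
    proof
      assume "a = 0"
      then have "u = hd p" using a by (simp add: hd_conv_nth)
      then show False using endpoint_unmatched[OF run MM mp, of u k] kL L_def u_def by auto
    qed
    have a1: "Suc a < length p"
    proof (rule ccontr)
      assume "\<not> Suc a < length p"
      then have "a = length p - 1" using a by simp
      moreover have "p \<noteq> []" using a(1) by (metis list.size(3) not_less0)
      ultimately have "u = last p" using a by (simp add: last_conv_nth)
      then show False using endpoint_unmatched[OF run MM mp, of u k] kL L_def u_def by auto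
    qed
    obtain b where b: "a = Suc b" using a0 not0_implies_Suc by blast
    define e1 where "e1 = {p!b, p!a}"
    define e2 where "e2 = {p!a, p!Suc a}"
    have e1E: "e1 \<in> E" using path_E[OF mp ME MsE, of b] a b e1_def by simp
    have e2E: "e2 \<in> E" using path_E[OF mp ME MsE, of a] a1 e2_def by simp
    have e1c: "e1 \<in> cur E ss k" using incur[OF e1E] e1_def a b by auto
    have e2c: "e2 \<in> cur E ss k" using incur[OF e2E] e2_def a1 by auto
    have "p!b \<noteq> p!Suc a" using nth_eq_iff_index_eq[OF d, of b "Suc a"] a1 b by simp
    moreover have "p!b \<noteq> p!a" using nth_eq_iff_index_eq[OF d, of b a] a b by simp
    ultimately have "e1 \<noteq> e2" unfolding e1_def e2_def by (auto simp: doubleton_eq_iff)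
    have "{e1,e2} \<subseteq> {e \<in> cur E ss k. u \<in> e}" using e1c e2c a e1_def e2_def by auto
    moreover have "finite {e \<in> cur E ss k. u \<in> e}"
    proof -
      have "{e \<in> cur E ss k. u \<in> e} \<subseteq> E" using cur_sub[of E ss k] by blast
      then show ?thesis using finE by (rule finite_subset)
    qed
    ultimately have "card {e1,e2} \<le> deg (cur E ss k) u" unfolding deg_def by (rule card_mono[rotated])
    then have du: "2 \<le> deg (cur E ss k) u" using \<open>e1 \<noteq> e2\<close> by simp
    have wx1E: "{w,x1} \<in> E" using x(1) MsE by blast
    have "{w,x1} \<in> cur E ss k" using incur[OF wx1E] x by auto
    then have "{w,x1} \<in> R k" unfolding R_def by simp
    then have "0 < D k" using card_gt_0_iff[of "R k"] finR[of k] DR[of k] by auto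
    then have "deg (cur E ss k) u \<le> D k" using run_min[OF run, of k w] kL unfolding L_def D_def u_def by simp
    then show ?thesis using du kL by auto
  qed
  define S2 where "S2 = {i. i < L \<and> 2 \<le> D i}"
  define i1 where "i1 = Max S2"
  have finS2: "finite S2" unfolding S2_def by simp
  have "S2 \<noteq> {}" using ex2 S2_def by blast
  then have i1S: "i1 \<in> S2" using Max_in finS2 i1_def by blast
  have i1L: "i1 < L" "2 \<le> D i1" using i1S S2_def by auto
  have Di1: "D (Suc i1) \<le> 1"
  proof (cases "Suc i1 < L")
    case True
    have "Suc i1 \<notin> S2"
    proof
      assume "Suc i1 \<in> S2"
      then have "Suc i1 \<le> i1" using Max_ge[OF finS2] i1_def by simp
      then show False by simp
    qed
    then show ?thesis using True S2_def by auto
  next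
    case False
    then have "Suc i1 = L" using i1L by simp
    then show ?thesis using DL by simp
  qed
  show ?thesis
  proof (cases "\<exists>v. transfer E ss Ms v w")
    case True then show ?thesis .
  next
    case False
    have c1: "x1 \<in> {fst (ss!i1), snd (ss!i1)}" "D (Suc i1) = D i1 - 1"
      using C[OF i1L(1)] Di1 i1L(2) False by auto
    have D1: "D (Suc i1) = 1" using c1 i1L Di1 by simp
    define S1 where "S1 = {i. i < L \<and> 1 \<le> D i}"
    define i0 where "i0 = Max S1"
    have finS1: "finite S1" unfolding S1_def by simp
    have sL: "Suc i1 < L" using D1 DL i1L by (metis Suc_lessI zero_neq_one)
    have sS1: "Suc i1 \<in> S1" using sL D1 S1_def by simp
    then have i0S: "i0 \<in> S1" using Max_in finS1 i0_def by blast
    have "Suc i1 \<le> i0" using Max_ge[OF finS1 sS1] i0_def by simp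
    have i0L: "i0 < L" "1 \<le> D i0" using i0S S1_def by auto
    have Di0: "D (Suc i0) = 0"
    proof (cases "Suc i0 < L")
      case True
      have "Suc i0 \<notin> S1"
      proof
        assume "Suc i0 \<in> S1"
        then have "Suc i0 \<le> i0" using Max_ge[OF finS1] i0_def by simp
        then show False by simp
      qed
      then show ?thesis using True S1_def by auto
    next
      case False
      then have "Suc i0 = L" using i0L by simp
      then show ?thesis using DL by simp
    qed
    have "x1 \<in> {fst (ss!i0), snd (ss!i0)}" using C[OF i0L(1)] Di0 i0L(2) False by auto
    moreover have "x1 \<notin> {fst (ss!i0), snd (ss!i0)}"
      using pairs_disj[OF run _ _ c1(1), of i0] \<open>Suc i1 \<le> i0\<close> i0L L_def by simp
    ultimately show ?thesis by blast
  qed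
qed


theorem lemma5:
  fixes V :: "'a set" and E :: "'a set set" and ss :: "('a \<times> 'a) list"
    and M Ms :: "'a set set" and p :: "'a list" and w :: 'a
  assumes "simple_graph V E"
    and "mingreedy_run E ss"
    and "M = greedy_matching ss"
    and "max_matching E Ms"
    and "components_ok M Ms"
    and "mm_path M Ms p"
    and "w \<in> {hd p, last p}"
  shows "(\<exists>v. transfer E ss Ms v w)
       \<and> 2 \<le> card {(v, x). x \<in> {hd p, last p} \<and> transfer E ss Ms v x}"
proof -
  have MsE: "Ms \<subseteq> E" using assms(4) unfolding max_matching_def matching_def by simp
  note ET = endpoint_transfer[OF assms(1,2,3) MsE assms(6)]
  have t0: "\<exists>v. transfer E ss Ms v w" using ET assms(7) by blast
  obtain v1 where v1: "transfer E ss Ms v1 (hd p)" using ET by blast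
  obtain v2 where v2: "transfer E ss Ms v2 (last p)" using ET by blast
  have d: "distinct p" and n4: "4 \<le> length p" using assms(6) unfolding mm_path_def by auto
  have "hd p \<noteq> last p"
  proof -
    have "p \<noteq> []" using n4 by (metis list.size(3) not_numeral_le_zero)
    then have "hd p = p!0" "last p = p!(length p - 1)" by (auto simp: hd_conv_nth last_conv_nth)
    moreover have "p!0 \<noteq> p!(length p - 1)"
      using nth_eq_iff_index_eq[OF d, of 0 "length p - 1"] n4 \<open>p \<noteq> []\<close> by auto
    ultimately show ?thesis by simp
  qed
  define T where "T = {(v, x). x \<in> {hd p, last p} \<and> transfer E ss Ms v x}"
  have "T \<subseteq> V \<times> {hd p, last p}"
  proof
    fix z assume "z \<in> T"
    then obtain v x where z: "z = (v,x)" "x \<in> {hd p, last p}" "transfer E ss Ms v x" unfolding T_def by auto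
    then have "{v,x} \<in> E" unfolding transfer_def by simp
    then have "v \<in> V" using E_sub[OF assms(1)] by blast
    then show "z \<in> V \<times> {hd p, last p}" using z by simp
  qed
  moreover have "finite V" using assms(1) unfolding simple_graph_def by simp
  ultimately have finT: "finite T" by (meson finite_SigmaI finite_insert finite.emptyI finite_subset)
  have "{(v1, hd p), (v2, last p)} \<subseteq> T" using v1 v2 unfolding T_def by auto
  then have "card {(v1, hd p), (v2, last p)} \<le> card T" using card_mono[OF finT] by blast
  then have "2 \<le> card T" using \<open>hd p \<noteq> last p\<close> by simp
  then show ?thesis using t0 T_def by simp
qed

end
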